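(* Let $S$ be a complete starsemiring, let $n\ge 1$, let $\Gamma$ be an alphabet, and let $M\in (S^{n\times n})^{\Gamma^*\times\Gamma^*}$ be a pushdown transition matrix. Then for all $p\in\Gamma$ and $\pi\in\Gamma^*$, $$(M^* )_{p\pi,\epsilon}=(M^* )_{p,\epsilon}\,(M^* )_{\pi,\epsilon}.$$
   Context: A complete starsemiring is a semiring $S$ in which sums $\sum_{i\in I}s_i$ of arbitrary families (arbitrary index sets $I$) are defined, extending finite sums and satisfying the usual infinite associativity, commutativity and distributivity laws, and which is equipped with the star operation $s^*=\sum_{j\ge 0}s^j$. Matrices over $S$ (also with infinite index sets) are added and multiplied by the usual formulas, using these infinite sums. An element $M\in (S^{n\times n})^{\Gamma^*\times\Gamma^*}$ is a $\Gamma^*\times\Gamma^*$ matrix whose blocks $M_{\pi_1,\pi_2}$ are $n\times n$ matrices over $S$. Such an $M$ is a pushdown transition matrix if (i) for each $p\in\Gamma$ only finitely many blocks $M_{p,\pi}$, $\pi\in\Gamma^*$, are nonzero, and (ii) for all $\pi_1,\pi_2\in\Gamma^*$: $M_{\pi_1,\pi_2}=M_{p,\pi}$ if there are $p\in\Gamma$, $\pi,\pi'\in\Gamma^*$ with $\pi_1=p\pi'$ and $\pi_2=\pi\pi'$, and $M_{\pi_1,\pi_2}=0$ otherwise. $M^*=\sum_{m\ge0}M^m$, and $(M^* )_{\pi,\pi'}$ denotes its $(\pi,\pi')$-block, an $n\times n$ matrix; $\epsilon$ is the empty word. *)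

theory Defs
  imports Main "HOL-Library.Countable"
begin

text \<open>Families are indexed by subsets of nat; families over any countable type
are reindexed through to_nat (see gsum).\<close>

locale complete_semiring =
  fixes csum :: "(nat \<Rightarrow> 'a::semiring_1) \<Rightarrow> nat set \<Rightarrow> 'a"
  assumes csum_cong: "(\<And>i. i \<in> I \<Longrightarrow> f i = g i) \<Longrightarrow> csum f I = csum g I"
    and csum_empty: "csum f {} = 0"
    and csum_single: "csum f {i} = f i"
    and csum_pair: "i \<noteq> j \<Longrightarrow> csum f {i, j} = f i + f j"
    and csum_partition:
      "(\<forall>j\<in>J. \<forall>k\<in>J. j \<noteq> k \<longrightarrow> P j \<inter> P k = {}) \<Longrightarrow>
       csum f (\<Union>j\<in>J. P j) = csum (\<lambda>j. csum f (P j)) J"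
    and csum_distrib_left: "csum (\<lambda>i. a * f i) I = a * csum f I"
    and csum_distrib_right: "csum (\<lambda>i. f i * a) I = csum f I * a"

definition gsum :: "((nat \<Rightarrow> 'a) \<Rightarrow> nat set \<Rightarrow> 'a) \<Rightarrow> ('b::countable \<Rightarrow> 'a) \<Rightarrow> 'b set \<Rightarrow> 'a" where
  "gsum cs f I = cs (\<lambda>k. f (from_nat k)) (to_nat ` I)"

definition sstar :: "((nat \<Rightarrow> 'a::semiring_1) \<Rightarrow> nat set \<Rightarrow> 'a) \<Rightarrow> 'a \<Rightarrow> 'a" where
  "sstar cs s = cs (\<lambda>j. s ^ j) UNIV"

text \<open>Matrices in (S^{n\<times>n})^{\<Gamma>^*\<times>\<Gamma>^*}: blocks indexed by pairs of
words, each block an n\<times>n matrix with row/column index type 'n (n = CARD('n)).\<close>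
type_synonym ('a, 'g, 'n) pdmat = "'g list \<Rightarrow> 'g list \<Rightarrow> 'n \<Rightarrow> 'n \<Rightarrow> 'a"

definition bmult :: "('n::finite \<Rightarrow> 'n \<Rightarrow> 'a::semiring_1) \<Rightarrow> ('n \<Rightarrow> 'n \<Rightarrow> 'a) \<Rightarrow> 'n \<Rightarrow> 'n \<Rightarrow> 'a" where
  "bmult X Y = (\<lambda>i j. \<Sum>k\<in>UNIV. X i k * Y k j)"

definition mmult :: "((nat \<Rightarrow> 'a::semiring_1) \<Rightarrow> nat set \<Rightarrow> 'a) \<Rightarrow>
    ('a, 'g::countable, 'n::finite) pdmat \<Rightarrow> ('a, 'g, 'n) pdmat \<Rightarrow> ('a, 'g, 'n) pdmat" where
  "mmult cs A B = (\<lambda>\<pi>1 \<pi>2 i j. gsum cs (\<lambda>(\<pi>, k). A \<pi>1 \<pi> i k * B \<pi> \<pi>2 k j) UNIV)"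

definition mone :: "('a::semiring_1, 'g, 'n) pdmat" where
  "mone = (\<lambda>\<pi>1 \<pi>2 i j. if \<pi>1 = \<pi>2 \<and> i = j then 1 else 0)"

primrec mpow :: "((nat \<Rightarrow> 'a::semiring_1) \<Rightarrow> nat set \<Rightarrow> 'a) \<Rightarrow>
    ('a, 'g::countable, 'n::finite) pdmat \<Rightarrow> nat \<Rightarrow> ('a, 'g, 'n) pdmat" where
  "mpow cs M 0 = mone"
| "mpow cs M (Suc m) = mmult cs (mpow cs M m) M"

definition mstar :: "((nat \<Rightarrow> 'a::semiring_1) \<Rightarrow> nat set \<Rightarrow> 'a) \<Rightarrow>
    ('a, 'g::countable, 'n::finite) pdmat \<Rightarrow> ('a, 'g, 'n) pdmat" where
  "mstar cs M = (\<lambda>\<pi>1 \<pi>2 i j. cs (\<lambda>m. mpow cs M m \<pi>1 \<pi>2 i j) UNIV)"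

definition pushdown_tm :: "('a::zero, 'g, 'n) pdmat \<Rightarrow> bool" where
  "pushdown_tm M \<longleftrightarrow>
     (\<forall>p. finite {\<pi>. M [p] \<pi> \<noteq> (\<lambda>i j. 0)}) \<and>
     (\<forall>p \<pi> \<pi>'. M (p # \<pi>') (\<pi> @ \<pi>') = M [p] \<pi>) \<and>
     (\<forall>\<pi>1 \<pi>2. \<not> (\<exists>p \<pi> \<pi>'. \<pi>1 = p # \<pi>' \<and> \<pi>2 = \<pi> @ \<pi>') \<longrightarrow> M \<pi>1 \<pi>2 = (\<lambda>i j. 0))"

end

theory Submission
  imports Defs
begin

context complete_semiring begin

lemma gsum_cong:
  "(\<And>x. x \<in> I \<Longrightarrow> f x = g x) \<Longrightarrow> gsum csum f I = gsum csum g I"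
  unfolding gsum_def by (rule csum_cong) auto

lemma gsum_single: "gsum csum f {x} = f x"
  unfolding gsum_def by (simp add: csum_single)

lemma gsum_empty: "gsum csum f {} = 0"
  unfolding gsum_def by (simp add: csum_empty)

lemma gsum_pair: "x \<noteq> y \<Longrightarrow> gsum csum f {x, y} = f x + f y"
  unfolding gsum_def by (simp add: csum_pair)

lemma gsum_distrib_left: "gsum csum (\<lambda>i. a * f i) I = a * gsum csum f I"
  unfolding gsum_def by (rule csum_distrib_left)

lemma gsum_distrib_right: "gsum csum (\<lambda>i. f i * a) I = gsum csum f I * a"
  unfolding gsum_def by (rule csum_distrib_right)

lemma gsum_partition:
  assumes "\<forall>j\<in>J. \<forall>k\<in>J. j \<noteq> k \<longrightarrow> P j \<inter> P k = {}"
  shows "gsum csum f (\<Union>j\<in>J. P j) = gsum csum (\<lambda>j. gsum csum f (P j)) J"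
proof -
  have e: "to_nat ` (\<Union>j\<in>J. P j) = (\<Union>k\<in>to_nat ` J. to_nat ` P (from_nat k))"
    by auto
  have d: "\<forall>j\<in>to_nat ` J. \<forall>k\<in>to_nat ` J. j \<noteq> k \<longrightarrow>
      to_nat ` P (from_nat j) \<inter> to_nat ` P (from_nat k) = {}"
  proof (intro ballI impI)
    fix j k assume j: "j \<in> to_nat ` J" and k: "k \<in> to_nat ` J" and jk: "j \<noteq> k"
    obtain x y where xy: "x \<in> J" "y \<in> J" "j = to_nat x" "k = to_nat y" using j k by auto
    then have "x \<noteq> y" using jk by auto
    then have "P (from_nat j) \<inter> P (from_nat k) = {}" using assms xy by auto
    then show "to_nat ` P (from_nat j) \<inter> to_nat ` P (from_nat k) = {}"
      by (auto dest: inj_onD[OF inj_to_nat])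
  qed
  show ?thesis
    unfolding gsum_def e by (subst csum_partition[OF d]) simp
qed

lemma gsum_zero: "(\<And>x. x \<in> I \<Longrightarrow> f x = 0) \<Longrightarrow> gsum csum f I = 0"
proof -
  assume "\<And>x. x \<in> I \<Longrightarrow> f x = 0"
  then have "gsum csum f I = gsum csum (\<lambda>x. 0 * (0::'a)) I" by (intro gsum_cong) auto
  also have "\<dots> = 0" by (subst gsum_distrib_left) simp
  finally show ?thesis .
qed

lemma gsum_Un:
  assumes "A \<inter> B = {}"
  shows "gsum csum f (A \<union> B) = gsum csum f A + gsum csum f B"
proof -
  have "A \<union> B = (\<Union>b\<in>{True, False}. if b then A else B)" by auto
  then have "gsum csum f (A \<union> B) = gsum csum (\<lambda>b. gsum csum f (if b then A else B)) {True, False}"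
    using gsum_partition[of "{True, False}" "\<lambda>b. if b then A else B" f] assms by auto
  also have "\<dots> = gsum csum f A + gsum csum f B" by (subst gsum_pair) auto
  finally show ?thesis .
qed

lemma gsum_finite: "finite I \<Longrightarrow> gsum csum f I = sum f I"
proof (induction I rule: finite_induct)
  case empty then show ?case by (simp add: gsum_empty)
next
  case (insert x F)
  have "gsum csum f (insert x F) = gsum csum f ({x} \<union> F)" by simp
  also have "\<dots> = f x + gsum csum f F" using insert by (subst gsum_Un) (auto simp: gsum_single)
  finally show ?case using insert by simp
qed

lemma gsum_subset:
  assumes "B \<subseteq> A" "\<And>x. x \<in> A - B \<Longrightarrow> f x = 0"
  shows "gsum csum f A = gsum csum f B"
proof -
  have "A = B \<union> (A - B)" using assms by auto
  then have "gsum csum f A = gsum csum f B + gsum csum f (A - B)"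
    by (metis Diff_disjoint gsum_Un)
  then show ?thesis using gsum_zero[of "A - B" f] assms by simp
qed

lemma gsum_reindex:
  assumes "inj_on h I"
  shows "gsum csum f (h ` I) = gsum csum (\<lambda>i. f (h i)) I"
proof -
  have "h ` I = (\<Union>i\<in>I. {h i})" by auto
  then show ?thesis using gsum_partition[of I "\<lambda>i. {h i}" f] assms
    by (auto simp: gsum_single dest: inj_onD)
qed

lemma gsum_Sigma:
  "gsum csum f (Sigma A B) = gsum csum (\<lambda>a. gsum csum (\<lambda>b. f (a, b)) (B a)) A"
proof -
  have "Sigma A B = (\<Union>a\<in>A. Pair a ` B a)" by auto
  then have "gsum csum f (Sigma A B) = gsum csum (\<lambda>a. gsum csum f (Pair a ` B a)) A"
    using gsum_partition[of A "\<lambda>a. Pair a ` B a" f] by auto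
  also have "\<dots> = gsum csum (\<lambda>a. gsum csum (\<lambda>b. f (a, b)) (B a)) A"
    by (intro gsum_cong) (simp add: gsum_reindex inj_on_def)
  finally show ?thesis .
qed

lemma gsum_swap:
  "gsum csum (\<lambda>a. gsum csum (\<lambda>b. f a b) B) A = gsum csum (\<lambda>b. gsum csum (\<lambda>a. f a b) A) B"
proof -
  have "gsum csum (\<lambda>a. gsum csum (\<lambda>b. f a b) B) A = gsum csum (\<lambda>(a,b). f a b) (A \<times> B)"
    by (simp add: gsum_Sigma)
  also have "A \<times> B = prod.swap ` (B \<times> A)" by auto
  also have "gsum csum (\<lambda>(a,b). f a b) (prod.swap ` (B \<times> A)) = gsum csum (\<lambda>(b,a). f a b) (B \<times> A)"
    by (subst gsum_reindex) (auto simp: case_prod_beta intro: gsum_cong)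
  also have "\<dots> = gsum csum (\<lambda>b. gsum csum (\<lambda>a. f a b) A) B"
    by (simp add: gsum_Sigma)
  finally show ?thesis .
qed

lemma gsum_sum:
  fixes K :: "'k::countable set"
  shows "finite K \<Longrightarrow> gsum csum (\<lambda>x. \<Sum>k\<in>K. f x k) I = (\<Sum>k\<in>K. gsum csum (\<lambda>x. f x k) I)"
  using gsum_swap[of f K I] by (simp add: gsum_finite)

lemma csum_gsum: "csum f I = gsum csum f I"
proof -
  have "to_nat ` I = (\<Union>j\<in>I. {to_nat j})" by auto
  then have "gsum csum f I = csum (\<lambda>j. csum (\<lambda>k. f (from_nat k)) {to_nat j}) I"
    unfolding gsum_def by (simp add: csum_partition)
  also have "\<dots> = csum f I" by (simp add: csum_single)
  finally show ?thesis by simp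
qed


lemma gsum_UNIV_prod:
  "gsum csum f UNIV = gsum csum (\<lambda>a. gsum csum (\<lambda>b. f (a, b)) UNIV) UNIV"
  using gsum_Sigma[of f UNIV "\<lambda>_. UNIV"] by simp

lemma mmult_blocks:
  "mmult csum A B x y i j = gsum csum (\<lambda>\<pi>. bmult (A x \<pi>) (B \<pi> y) i j) UNIV"
proof -
  have "mmult csum A B x y i j = gsum csum (\<lambda>\<pi>. gsum csum (\<lambda>k. A x \<pi> i k * B \<pi> y k j) UNIV) UNIV"
    unfolding mmult_def by (subst gsum_UNIV_prod) simp
  also have "\<dots> = gsum csum (\<lambda>\<pi>. bmult (A x \<pi>) (B \<pi> y) i j) UNIV"
    by (simp add: gsum_finite bmult_def)
  finally show ?thesis .
qed

lemma mmult_assoc: "mmult csum (mmult csum A B) C = mmult csum A (mmult csum B C)"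
proof (intro ext)
  fix x y i j
  have "mmult csum (mmult csum A B) C x y i j =
    gsum csum (\<lambda>(\<sigma>, l). gsum csum (\<lambda>(\<pi>, k). A x \<pi> i k * B \<pi> \<sigma> k l * C \<sigma> y l j) UNIV) UNIV"
    unfolding mmult_def by (intro gsum_cong) (auto simp: gsum_distrib_right[symmetric] split_def)
  also have "\<dots> = gsum csum (\<lambda>(\<pi>, k). gsum csum (\<lambda>(\<sigma>, l). A x \<pi> i k * B \<pi> \<sigma> k l * C \<sigma> y l j) UNIV) UNIV"
    using gsum_swap[of "\<lambda>sl pk. A x (fst pk) i (snd pk) * B (fst pk) (fst sl) (snd pk) (snd sl) * C (fst sl) y (snd sl) j" UNIV UNIV]
    by (simp add: split_def)
  also have "\<dots> = mmult csum A (mmult csum B C) x y i j"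
    unfolding mmult_def by (intro gsum_cong) (auto simp: gsum_distrib_left[symmetric] split_def mult.assoc)
  finally show "mmult csum (mmult csum A B) C x y i j = mmult csum A (mmult csum B C) x y i j" .
qed

lemma mone_left: "mmult csum mone B = B"
proof (intro ext)
  fix x y i j
  have "mmult csum mone B x y i j = gsum csum (\<lambda>(\<pi>, k). mone x \<pi> i k * B \<pi> y k j) {(x, i)}"
    unfolding mmult_def by (rule gsum_subset) (auto simp: mone_def split: if_splits)
  then show "mmult csum mone B x y i j = B x y i j" by (simp add: gsum_single mone_def)
qed

lemma mone_right: "mmult csum B mone = B"
proof (intro ext)
  fix x y i j
  have "mmult csum B mone x y i j = gsum csum (\<lambda>(\<pi>, k). B x \<pi> i k * mone \<pi> y k j) {(y, j)}"
    unfolding mmult_def by (rule gsum_subset) (auto simp: mone_def split: if_splits)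
  then show "mmult csum B mone x y i j = B x y i j" by (simp add: gsum_single mone_def)
qed

lemma mpow_Suc_left: "mpow csum M (Suc m) = mmult csum M (mpow csum M m)"
proof (induction m)
  case 0 then show ?case by (simp add: mone_left mone_right)
next
  case (Suc m)
  have "mpow csum M (Suc (Suc m)) = mmult csum (mmult csum M (mpow csum M m)) M"
    using Suc by simp
  also have "\<dots> = mmult csum M (mpow csum M (Suc m))" by (simp add: mmult_assoc)
  finally show ?case .
qed

lemma pd_nil: "pushdown_tm M \<Longrightarrow> M [] y = (\<lambda>i j. 0)"
  unfolding pushdown_tm_def by auto

lemma pd_cons: "pushdown_tm M \<Longrightarrow> M (a # w) (\<tau> @ w) = M [a] \<tau>"
  unfolding pushdown_tm_def by auto

lemma pd_cons_zero:
  assumes "pushdown_tm M" "\<sigma> \<notin> range (\<lambda>\<tau>. \<tau> @ w)"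
  shows "M (a # w) \<sigma> = (\<lambda>i j. 0)"
proof -
  have "\<not> (\<exists>p \<pi> \<pi>'. a # w = p # \<pi>' \<and> \<sigma> = \<pi> @ \<pi>')" using assms(2) by auto
  then show ?thesis using assms(1) unfolding pushdown_tm_def by blast
qed

lemma mmult_M_cons:
  assumes "pushdown_tm M"
  shows "mmult csum M X (a # w) y i j = gsum csum (\<lambda>\<tau>. bmult (M [a] \<tau>) (X (\<tau> @ w) y) i j) UNIV"
proof -
  have "mmult csum M X (a # w) y i j = gsum csum (\<lambda>\<sigma>. bmult (M (a # w) \<sigma>) (X \<sigma> y) i j) UNIV"
    by (rule mmult_blocks)
  also have "\<dots> = gsum csum (\<lambda>\<sigma>. bmult (M (a # w) \<sigma>) (X \<sigma> y) i j) (range (\<lambda>\<tau>. \<tau> @ w))"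
    by (rule gsum_subset) (auto simp: pd_cons_zero[OF assms] bmult_def)
  also have "\<dots> = gsum csum (\<lambda>\<tau>. bmult (M [a] \<tau>) (X (\<tau> @ w) y) i j) UNIV"
    by (subst gsum_reindex) (auto simp: inj_on_def pd_cons[OF assms])
  finally show ?thesis .
qed

lemma mpow_nil: "pushdown_tm M \<Longrightarrow> mpow csum M (Suc t) [] y = (\<lambda>i j. 0)"
  by (intro ext) (simp only: mpow_Suc_left mmult_blocks, simp add: pd_nil bmult_def gsum_zero)


lemma mpow_zero_ne: "x \<noteq> y \<Longrightarrow> mpow csum M 0 x y = (\<lambda>i j. 0)"
  by (simp add: mone_def)

lemma bmult_zero_left: "bmult (\<lambda>i j. 0) Y = (\<lambda>i j. 0)"
  by (simp add: bmult_def)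

lemma bmult_id_left: "bmult (\<lambda>i j. if i = j then 1 else 0) Y = Y"
proof (intro ext)
  fix i j
  have "(\<Sum>k\<in>UNIV. (if i = k then 1 else 0) * Y k j) = (\<Sum>k\<in>UNIV. if i = k then Y k j else 0)"
    by (intro sum.cong) auto
  then show "bmult (\<lambda>i j. if i = j then 1 else 0) Y i j = Y i j" by (simp add: bmult_def)
qed

lemma nil_case:
  assumes "pushdown_tm M"
  shows "(\<Sum>t\<le>m. bmult (mpow csum M t [] []) (Y t) i j) = Y 0 i j"
proof -
  have "(\<Sum>t\<le>m. bmult (mpow csum M t [] []) (Y t) i j)
      = bmult (mpow csum M 0 [] []) (Y 0) i j + (\<Sum>t\<in>{..m} - {0}. bmult (mpow csum M t [] []) (Y t) i j)"
    by (subst sum.remove[of _ 0]) auto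
  also have "(\<Sum>t\<in>{..m} - {0}. bmult (mpow csum M t [] []) (Y t) i j) = 0"
  proof (rule sum.neutral, intro ballI)
    fix t assume "t \<in> {..m} - {0}"
    then obtain t' where "t = Suc t'" by (cases t) auto
    then show "bmult (mpow csum M t [] []) (Y t) i j = 0"
      using mpow_nil[OF assms] by (simp add: bmult_zero_left)
  qed
  also have "mpow csum M 0 [] [] = (\<lambda>i j. if i = j then 1 else 0)" by (simp add: mone_def)
  finally show ?thesis by (simp add: bmult_id_left)
qed

lemma main_lemma:
  assumes pd: "pushdown_tm M"
  shows "mpow csum M m (\<rho> @ \<pi>) [] i j =
    (\<Sum>t\<le>m. bmult (mpow csum M t \<rho> []) (mpow csum M (m - t) \<pi> []) i j)"
proof (induction m arbitrary: \<rho> i j)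
  case 0
  show ?case
  proof (cases \<rho>)
    case Nil then show ?thesis using nil_case[OF pd, where m=0 and Y="\<lambda>t. mpow csum M (0 - t) \<pi> []"] by simp
  next
    case (Cons a r)
    then show ?thesis by (simp add: mone_def bmult_def)
  qed
next
  case (Suc m)
  show ?case
  proof (cases \<rho>)
    case Nil then show ?thesis
      using nil_case[OF pd, where m="Suc m" and Y="\<lambda>t. mpow csum M (Suc m - t) \<pi> []"] by simp
  next
    case (Cons a r)
    define N where "N = (\<lambda>\<tau>. M [a] \<tau>)"
    define A where "A = (\<lambda>t \<tau>. mpow csum M t (\<tau> @ r) [])"
    define B where "B = (\<lambda>t. mpow csum M (m - t) \<pi> [])"
    have "mpow csum M (Suc m) (\<rho> @ \<pi>) [] i j =
        gsum csum (\<lambda>\<tau>. bmult (N \<tau>) (mpow csum M m (\<tau> @ r @ \<pi>) []) i j) UNIV"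
      unfolding mpow_Suc_left Cons N_def by (simp add: mmult_M_cons[OF pd])
    also have "\<dots> = gsum csum (\<lambda>\<tau>. \<Sum>k\<in>UNIV. N \<tau> i k *
          (\<Sum>t\<le>m. \<Sum>l\<in>UNIV. A t \<tau> k l * B t l j)) UNIV"
      unfolding A_def B_def using Suc.IH[of "_ @ r"] by (simp add: bmult_def)
    also have "\<dots> = gsum csum (\<lambda>\<tau>. \<Sum>t\<le>m. \<Sum>l\<in>UNIV. (\<Sum>k\<in>UNIV. N \<tau> i k * A t \<tau> k l) * B t l j) UNIV"
    proof (intro gsum_cong)
      fix \<tau>
      have "(\<Sum>k\<in>UNIV. N \<tau> i k * (\<Sum>t\<le>m. \<Sum>l\<in>UNIV. A t \<tau> k l * B t l j))
          = (\<Sum>k\<in>UNIV. \<Sum>t\<le>m. \<Sum>l\<in>UNIV. N \<tau> i k * A t \<tau> k l * B t l j)"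
        by (simp add: sum_distrib_left mult.assoc)
      also have "\<dots> = (\<Sum>t\<le>m. \<Sum>k\<in>UNIV. \<Sum>l\<in>UNIV. N \<tau> i k * A t \<tau> k l * B t l j)"
        by (rule sum.swap)
      also have "\<dots> = (\<Sum>t\<le>m. \<Sum>l\<in>UNIV. \<Sum>k\<in>UNIV. N \<tau> i k * A t \<tau> k l * B t l j)"
        by (intro sum.cong refl sum.swap)
      also have "\<dots> = (\<Sum>t\<le>m. \<Sum>l\<in>UNIV. (\<Sum>k\<in>UNIV. N \<tau> i k * A t \<tau> k l) * B t l j)"
        by (simp add: sum_distrib_right)
      finally show "(\<Sum>k\<in>UNIV. N \<tau> i k * (\<Sum>t\<le>m. \<Sum>l\<in>UNIV. A t \<tau> k l * B t l j))
          = (\<Sum>t\<le>m. \<Sum>l\<in>UNIV. (\<Sum>k\<in>UNIV. N \<tau> i k * A t \<tau> k l) * B t l j)" .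
    qed
    also have "\<dots> = (\<Sum>t\<le>m. \<Sum>l\<in>UNIV. gsum csum (\<lambda>\<tau>. \<Sum>k\<in>UNIV. N \<tau> i k * A t \<tau> k l) UNIV * B t l j)"
      by (simp add: gsum_sum gsum_distrib_right)
    also have "\<dots> = (\<Sum>t\<le>m. \<Sum>l\<in>UNIV. mpow csum M (Suc t) (a # r) [] i l * B t l j)"
      by (simp only: mpow_Suc_left mmult_M_cons[OF pd], simp add: N_def A_def bmult_def)
    also have "\<dots> = (\<Sum>t\<le>m. bmult (mpow csum M (Suc t) \<rho> []) (mpow csum M (Suc m - Suc t) \<pi> []) i j)"
      by (simp add: Cons B_def bmult_def)
    also have "\<dots> = (\<Sum>t\<le>Suc m. bmult (mpow csum M t \<rho> []) (mpow csum M (Suc m - t) \<pi> []) i j)"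
      by (subst sum.atMost_Suc_shift) (simp add: Cons mone_def bmult_def)
    finally show ?thesis .
  qed
qed

lemma cauchy:
  "csum (\<lambda>m. \<Sum>t\<le>m. f t (m - t)) UNIV = csum (\<lambda>t. csum (\<lambda>s. f t s) UNIV) UNIV"
proof -
  have U: "(UNIV :: (nat \<times> nat) set) = (\<Union>m\<in>UNIV. {p. fst p + snd p = m})" by auto
  have "gsum csum (\<lambda>p. f (fst p) (snd p)) (UNIV :: (nat \<times> nat) set)
      = gsum csum (\<lambda>m. gsum csum (\<lambda>p. f (fst p) (snd p)) {p. fst p + snd p = m}) UNIV"
    by (subst U, rule gsum_partition) auto
  also have "\<dots> = gsum csum (\<lambda>m. \<Sum>t\<le>m. f t (m - t)) UNIV"
  proof (rule gsum_cong)
    fix m :: nat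
    have "{p. fst p + snd p = m} = (\<lambda>t. (t, m - t)) ` {..m}" by force
    then have "gsum csum (\<lambda>p. f (fst p) (snd p)) {p. fst p + snd p = m}
        = gsum csum (\<lambda>t. f t (m - t)) {..m}"
      by (simp add: gsum_reindex inj_on_def)
    then show "gsum csum (\<lambda>p. f (fst p) (snd p)) {p. fst p + snd p = m} = (\<Sum>t\<le>m. f t (m - t))"
      by (simp add: gsum_finite)
  qed
  finally have 1: "gsum csum (\<lambda>p. f (fst p) (snd p)) (UNIV :: (nat \<times> nat) set)
      = gsum csum (\<lambda>m. \<Sum>t\<le>m. f t (m - t)) UNIV" .
  have 2: "gsum csum (\<lambda>p. f (fst p) (snd p)) (UNIV :: (nat \<times> nat) set)
      = gsum csum (\<lambda>t. gsum csum (\<lambda>s. f t s) UNIV) UNIV"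
    by (subst gsum_UNIV_prod) simp
  show ?thesis using 1 2 by (simp add: csum_gsum)
qed

end

theorem theorem1:
  fixes cs :: "(nat \<Rightarrow> 'a::semiring_1) \<Rightarrow> nat set \<Rightarrow> 'a"
    and M :: "('a, 'g::finite, 'n::finite) pdmat"
  assumes "complete_semiring cs"
    and "pushdown_tm M"
  shows "mstar cs M (p # \<pi>) [] = bmult (mstar cs M [p] []) (mstar cs M \<pi> [])"
proof (intro ext)
  interpret complete_semiring cs by fact
  fix i j
  have "mstar cs M (p # \<pi>) [] i j = cs (\<lambda>m. mpow cs M m ([p] @ \<pi>) [] i j) UNIV"
    by (simp add: mstar_def)
  also have "\<dots> = cs (\<lambda>m. \<Sum>t\<le>m. \<Sum>k\<in>UNIV. mpow cs M t [p] [] i k * mpow cs M (m - t) \<pi> [] k j) UNIV"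
    by (simp only: main_lemma[OF assms(2)] bmult_def)
  also have "\<dots> = cs (\<lambda>t. cs (\<lambda>s. \<Sum>k\<in>UNIV. mpow cs M t [p] [] i k * mpow cs M s \<pi> [] k j) UNIV) UNIV"
    by (rule cauchy)
  also have "\<dots> = (\<Sum>k\<in>UNIV. cs (\<lambda>t. cs (\<lambda>s. mpow cs M t [p] [] i k * mpow cs M s \<pi> [] k j) UNIV) UNIV)"
    by (simp add: csum_gsum gsum_sum)
  also have "\<dots> = (\<Sum>k\<in>UNIV. cs (\<lambda>t. mpow cs M t [p] [] i k) UNIV * cs (\<lambda>s. mpow cs M s \<pi> [] k j) UNIV)"
    by (simp add: csum_distrib_left csum_distrib_right)
  also have "\<dots> = bmult (mstar cs M [p] []) (mstar cs M \<pi> []) i j"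
    by (simp add: mstar_def bmult_def)
  finally show "mstar cs M (p # \<pi>) [] i j = bmult (mstar cs M [p] []) (mstar cs M \<pi> []) i j" .
qed

end
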